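(* Let $d\ge 2$ and let $n_k$ denote the number of vertices of $L^k(SF(d,4))$, where $SF(d,4)$ is the square-free digraph; equivalently, $n_k$ is the number of words of length $k+4$ over the alphabet $\{0,1,\dots,d\}$ having no two equal consecutive letters and no factor of the form $abab$ (with letters $a\neq b$). Then $n_0=d^4+d^3-d^2-d$, $n_1=d^5+d^4-2d^3-d^2+d$, and $$n_k=(d-1)\,n_{k-1}+(d-1)\,n_{k-2}\qquad\text{for all } k\ge 2.$$
   Context: The square-free digraph $SF(d,4)$ has as vertices the words $a_1a_2a_3a_4$ over $\{0,1,\dots,d\}$ with $a_i\ne a_{i+1}$ for $i=1,2,3$ and not of the form $abab$ (i.e., not $a_1=a_3$ and $a_2=a_4$); there is an arc from $a_1a_2a_3a_4$ to $a_2a_3a_4a_5$ whenever $a_5\ne a_4$ and, if $a_2=a_4$, then $a_5\ne a_3$. The line digraph $LG$ has as vertex set the set of arcs of $G$, with an arc from $e$ to $f$ whenever the head of $e$ equals the tail of $f$; $L^0G=G$, $L^kG=L(L^{k-1}G)$. *)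

theory Defs
  imports Main
begin

text \<open>Words of length k+4 of this kind are exactly
  the vertices of the k-th iterated line digraph of the square-free digraph SF(d,4)
  (a vertex of L^k G is a walk of length k in G, and a walk in SF(d,4) of length k
  is determined by the word of length k+4 it spells).\<close>
definition sf_word :: "nat \<Rightarrow> nat list \<Rightarrow> bool" where
  "sf_word d w \<longleftrightarrow>
     set w \<subseteq> {0..d}
   \<and> (\<forall>i. i + 1 < length w \<longrightarrow> w ! i \<noteq> w ! (i + 1))
   \<and> \<not> (\<exists>i. i + 3 < length w \<and> w ! i = w ! (i + 2) \<and> w ! (i + 1) = w ! (i + 3))"

definition sf_words :: "nat \<Rightarrow> nat \<Rightarrow> nat list set" where
  "sf_words d m = {w. length w = m \<and> sf_word d w}"

definition nSF :: "nat \<Rightarrow> nat \<Rightarrow> nat" where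
  "nSF d k = card (sf_words d (k + 4))"

end

theory Submission imports Defs begin

definition allowed :: "nat \<Rightarrow> nat list \<Rightarrow> nat \<Rightarrow> bool" where
  "allowed d w a \<longleftrightarrow> a \<le> d \<and> (w \<noteq> [] \<longrightarrow> a \<noteq> w ! 0)
     \<and> (3 \<le> length w \<longrightarrow> \<not> (a = w ! 1 \<and> w ! 0 = w ! 2))"

lemma sf_word_Nil: "sf_word d []"
  by (simp add: sf_word_def)

lemma sf_word_Cons: "sf_word d (a # w) \<longleftrightarrow> sf_word d w \<and> allowed d w a"
proof
  assume h: "sf_word d (a # w)"
  have s: "set (a#w) \<subseteq> {0..d}" and n: "\<And>i. i + 1 < length (a#w) \<Longrightarrow> (a#w) ! i \<noteq> (a#w) ! (i + 1)"
   and q: "\<And>i. i + 3 < length (a#w) \<Longrightarrow> \<not>((a#w) ! i = (a#w) ! (i + 2) \<and> (a#w) ! (i + 1) = (a#w) ! (i + 3))"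
    using h unfolding sf_word_def by blast+
  have "sf_word d w" unfolding sf_word_def
  proof (intro conjI allI impI)
    show "set w \<subseteq> {0..d}" using s by auto
    fix i assume "i + 1 < length w" thus "w ! i \<noteq> w ! (i+1)" using n[of "Suc i"] by simp
  next
    show "\<not> (\<exists>i. i + 3 < length w \<and> w ! i = w ! (i + 2) \<and> w ! (i + 1) = w ! (i + 3))"
    proof
      assume "\<exists>i. i + 3 < length w \<and> w ! i = w ! (i + 2) \<and> w ! (i + 1) = w ! (i + 3)"
      then obtain i where "i + 3 < length w" "w ! i = w ! (i + 2)" "w ! (i + 1) = w ! (i + 3)" by blast
      thus False using q[of "Suc i"] by (simp add: add.commute)
    qed
  qed
  moreover have "allowed d w a" unfolding allowed_def
  proof (intro conjI impI)
    show "a \<le> d" using s by auto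
    assume "w \<noteq> []" thus "a \<noteq> w ! 0" using n[of 0] by simp
  next
    assume "3 \<le> length w" thus "\<not> (a = w ! 1 \<and> w ! 0 = w ! 2)" using q[of 0]
      by (simp add: numeral_3_eq_3 numeral_2_eq_2)
  qed
  ultimately show "sf_word d w \<and> allowed d w a" ..
next
  assume h: "sf_word d w \<and> allowed d w a"
  have s: "set w \<subseteq> {0..d}" and n: "\<And>i. i + 1 < length w \<Longrightarrow> w ! i \<noteq> w ! (i + 1)"
   and q: "\<And>i. i + 3 < length w \<Longrightarrow> \<not>(w ! i = w ! (i + 2) \<and> w ! (i + 1) = w ! (i + 3))"
    using h unfolding sf_word_def by blast+
  have al: "a \<le> d" "w \<noteq> [] \<Longrightarrow> a \<noteq> w ! 0" "3 \<le> length w \<Longrightarrow> \<not> (a = w ! 1 \<and> w ! 0 = w ! 2)"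
    using h unfolding allowed_def by blast+
  show "sf_word d (a # w)" unfolding sf_word_def
  proof (intro conjI allI impI)
    show "set (a#w) \<subseteq> {0..d}" using s al by auto
    fix i assume i: "i + 1 < length (a#w)" show "(a#w) ! i \<noteq> (a#w) ! (i+1)"
    proof (cases i)
      case 0 thus ?thesis using al(2) i by auto
    next
      case (Suc j) thus ?thesis using n[of j] i by simp
    qed
  next
    show "\<not> (\<exists>i. i + 3 < length (a#w) \<and> (a#w) ! i = (a#w) ! (i + 2) \<and> (a#w) ! (i + 1) = (a#w) ! (i + 3))"
    proof
      assume "\<exists>i. i + 3 < length (a#w) \<and> (a#w) ! i = (a#w) ! (i + 2) \<and> (a#w) ! (i + 1) = (a#w) ! (i + 3)"
      then obtain i where i: "i + 3 < length (a#w)" "(a#w) ! i = (a#w) ! (i + 2)" "(a#w) ! (i + 1) = (a#w) ! (i + 3)" by blast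
      show False
      proof (cases i)
        case 0 thus ?thesis using al(3) i by (simp add: numeral_3_eq_3 numeral_2_eq_2)
      next
        case (Suc j) thus ?thesis using q[of j] i by (simp add: add.commute)
      qed
    qed
  qed
qed

definition typeA :: "nat list \<Rightarrow> bool" where
  "typeA v \<longleftrightarrow> 3 \<le> length v \<and> v ! 0 = v ! 2"

lemma finite_sf: "finite (sf_words d m)"
proof -
  have "sf_words d m \<subseteq> {w. set w \<subseteq> {0..d} \<and> length w = m}"
    by (auto simp: sf_words_def sf_word_def)
  thus ?thesis using finite_lists_length_eq[of "{0..d}" m] finite_subset by blast
qed

lemma split_set:
  "{v \<in> sf_words d (Suc m). Q v} = (\<lambda>(w,a). a # w) ` (SIGMA w:sf_words d m. {a. allowed d w a \<and> Q (a # w)})"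
proof (rule set_eqI)
  fix v show "v \<in> {v \<in> sf_words d (Suc m). Q v} \<longleftrightarrow> v \<in> (\<lambda>(w,a). a # w) ` (SIGMA w:sf_words d m. {a. allowed d w a \<and> Q (a # w)})"
  proof (cases v)
    case Nil thus ?thesis by (auto simp: sf_words_def)
  next
    case (Cons a w) thus ?thesis by (auto simp: sf_words_def sf_word_Cons image_iff)
  qed
qed

lemma card_split:
  "card {v \<in> sf_words d (Suc m). Q v} = (\<Sum>w\<in>sf_words d m. card {a. allowed d w a \<and> Q (a # w)})"
proof -
  have inj: "inj_on (\<lambda>(w,a). a # w) X" for X :: "(nat list \<times> nat) set"
    by (auto simp: inj_on_def)
  have fin: "\<And>w. finite {a. allowed d w a \<and> Q (a # w)}"
    by (rule finite_subset[of _ "{0..d}"]) (auto simp: allowed_def)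
  show ?thesis unfolding split_set
    by (simp add: card_image[OF inj] card_SigmaI finite_sf fin)
qed


lemma card_allowed:
  assumes "sf_word d w"
  shows "card {a. allowed d w a \<and> True} = (if w = [] then d + 1 else if typeA w then d - 1 else d)"
proof -
  have s: "set w \<subseteq> {0..d}" and n: "\<And>i. i + 1 < length w \<Longrightarrow> w ! i \<noteq> w ! (i + 1)"
    using assms unfolding sf_word_def by blast+
  show ?thesis
  proof (cases "w = []")
    case True
    hence "{a. allowed d w a \<and> True} = {0..d}" by (auto simp: allowed_def)
    thus ?thesis using True by simp
  next
    case ne: False
    have w0: "w ! 0 \<in> {0..d}" using s ne by (auto simp: nth_mem subset_iff)
    show ?thesis
    proof (cases "typeA w")
      case True
      hence l: "3 \<le> length w" "w ! 0 = w ! 2" by (auto simp: typeA_def)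
      have "w ! 1 \<in> set w" using l by (intro nth_mem) simp
      hence w1: "w ! 1 \<in> {0..d}" using s by blast
      have d01: "w ! 0 \<noteq> w ! 1" using n[of 0] l by simp
      have "{a. allowed d w a \<and> True} = {0..d} - {w!0, w!1}"
        using l ne by (auto simp: allowed_def)
      moreover have "card ({0..d} - {w!0, w!1}) = d - 1"
        using w0 w1 d01 by (simp add: card_Diff_subset)
      ultimately show ?thesis using True ne by simp
    next
      case False
      have "{a. allowed d w a \<and> True} = {0..d} - {w!0}"
        using False ne by (auto simp: allowed_def typeA_def)
      moreover have "card ({0..d} - {w!0}) = d"
        using w0 by (simp add: card_Diff_subset)
      ultimately show ?thesis using False ne by simp
    qed
  qed
qed

lemma card_allowedA:
  assumes "sf_word d w"
  shows "card {a. allowed d w a \<and> typeA (a # w)} = (if 2 \<le> length w \<and> \<not> typeA w then 1 else 0)"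
proof -
  have s: "set w \<subseteq> {0..d}" and n: "\<And>i. i + 1 < length w \<Longrightarrow> w ! i \<noteq> w ! (i + 1)"
    using assms unfolding sf_word_def by blast+
  show ?thesis
  proof (cases "2 \<le> length w \<and> \<not> typeA w")
    case True
    have "w ! 1 \<in> set w" using True by (intro nth_mem) simp
    hence w1: "w ! 1 \<le> d" using s by auto
    have d01: "w ! 0 \<noteq> w ! 1" using n[of 0] True by simp
    have "{a. allowed d w a \<and> typeA (a # w)} = {w ! 1}"
      using True w1 d01 by (auto simp: allowed_def typeA_def)
    thus ?thesis by (simp only: if_P[OF True]) simp
  next
    case False
    have "{a. allowed d w a \<and> typeA (a # w)} = {}"
      using False by (auto simp: allowed_def typeA_def)
    thus ?thesis by (simp only: if_not_P[OF False]) simp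
  qed
qed

definition sc :: "nat \<Rightarrow> nat \<Rightarrow> int" where "sc d m = int (card (sf_words d m))"
definition ac :: "nat \<Rightarrow> nat \<Rightarrow> int" where "ac d m = int (card {w \<in> sf_words d m. typeA w})"

lemma F1: "sc d (Suc m) = (\<Sum>w\<in>sf_words d m. int (if w = [] then d + 1 else if typeA w then d - 1 else d))"
proof -
  have "sc d (Suc m) = int (card {v \<in> sf_words d (Suc m). True})" by (simp add: sc_def)
  also have "\<dots> = int (\<Sum>w\<in>sf_words d m. card {a. allowed d w a \<and> True})" by (simp only: card_split)
  also have "\<dots> = (\<Sum>w\<in>sf_words d m. int (card {a. allowed d w a \<and> True}))" by simp
  also have "\<dots> = (\<Sum>w\<in>sf_words d m. int (if w = [] then d + 1 else if typeA w then d - 1 else d))"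
  proof (rule sum.cong)
    fix w assume "w \<in> sf_words d m"
    hence "sf_word d w" by (simp add: sf_words_def)
    from card_allowed[OF this] show "int (card {a. allowed d w a \<and> True}) = int (if w = [] then d + 1 else if typeA w then d - 1 else d)"
      by (simp only:)
  qed simp
  finally show ?thesis .
qed

lemma F2: "ac d (Suc m) = (\<Sum>w\<in>sf_words d m. (if 2 \<le> length w \<and> \<not> typeA w then 1 else 0))"
proof -
  have "ac d (Suc m) = int (\<Sum>w\<in>sf_words d m. card {a. allowed d w a \<and> typeA (a # w)})"
    by (simp only: ac_def card_split)
  also have "\<dots> = (\<Sum>w\<in>sf_words d m. int (card {a. allowed d w a \<and> typeA (a # w)}))" by simp
  also have "\<dots> = (\<Sum>w\<in>sf_words d m. (if 2 \<le> length w \<and> \<not> typeA w then 1 else 0))"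
  proof (rule sum.cong)
    fix w assume "w \<in> sf_words d m"
    hence "sf_word d w" by (simp add: sf_words_def)
    from card_allowedA[OF this] show "int (card {a. allowed d w a \<and> typeA (a # w)}) = (if 2 \<le> length w \<and> \<not> typeA w then 1 else 0)"
      by simp
  qed simp
  finally show ?thesis .
qed

lemma sumA: "(\<Sum>w\<in>sf_words d m. (if typeA w then 1 else 0) :: int) = ac d m"
  using sum.inter_filter[OF finite_sf, of "\<lambda>_. 1::int" d m typeA, symmetric]
  by (simp add: ac_def)

lemma sumS: "(\<Sum>w\<in>sf_words d m. (1 :: int)) = sc d m"
  by (simp add: sc_def)

lemma rec1:
  assumes "d \<ge> 2" "m \<ge> 1"
  shows "sc d (Suc m) = int d * sc d m - ac d m"
proof -
  have "sc d (Suc m) = (\<Sum>w\<in>sf_words d m. int d - (if typeA w then 1 else 0))"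
    unfolding F1 using assms by (intro sum.cong) (auto simp: sf_words_def)
  also have "\<dots> = int d * sc d m - ac d m"
    by (simp add: sum_subtractf sumA sumS[symmetric] sum_distrib_left)
  finally show ?thesis .
qed

lemma rec2:
  assumes "m \<ge> 2"
  shows "ac d (Suc m) = sc d m - ac d m"
proof -
  have "ac d (Suc m) = (\<Sum>w\<in>sf_words d m. 1 - (if typeA w then 1 else 0))"
    unfolding F2 using assms by (intro sum.cong) (auto simp: sf_words_def)
  also have "\<dots> = sc d m - ac d m"
    by (simp add: sum_subtractf sumA sumS[symmetric])
  finally show ?thesis .
qed

lemma ac_small: assumes "m < 3" shows "ac d m = 0"
proof -
  have "{w \<in> sf_words d m. typeA w} = {}" using assms by (auto simp: typeA_def sf_words_def)
  thus ?thesis unfolding ac_def by (metis card.empty of_nat_0)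
qed

lemma sc0: "sc d 0 = 1"
proof -
  have "sf_words d 0 = {[]}" by (auto simp: sf_words_def sf_word_Nil)
  thus ?thesis by (simp add: sc_def)
qed

lemma sc1: "sc d 1 = int d + 1"
proof -
  have "sf_words d 0 = {[]}" by (auto simp: sf_words_def sf_word_Nil)
  thus ?thesis using F1[of d 0] by simp
qed

theorem mainTheorem11:
  fixes d :: nat
  assumes "d \<ge> 2"
  shows "int (nSF d 0) = int d ^ 4 + int d ^ 3 - int d ^ 2 - int d
       \<and> int (nSF d 1) = int d ^ 5 + int d ^ 4 - 2 * int d ^ 3 - int d ^ 2 + int d
       \<and> (\<forall>k\<ge>2. int (nSF d k) = (int d - 1) * int (nSF d (k - 1)) + (int d - 1) * int (nSF d (k - 2)))"
proof -
  have n: "int (nSF d k) = sc d (k + 4)" for k by (simp add: nSF_def sc_def)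
  have s2: "sc d 2 = int d * (int d + 1)" using rec1[OF assms, of 1] sc1 ac_small[of 1 d] by (simp add: numeral_2_eq_2)
  have s3: "sc d 3 = int d * sc d 2" using rec1[OF assms, of 2] ac_small[of 2 d] by (simp add: numeral_3_eq_3)
  have a3: "ac d 3 = sc d 2" using rec2[of 2 d] ac_small[of 2 d] by (simp add: numeral_3_eq_3)
  have s4: "sc d 4 = int d * sc d 3 - ac d 3" using rec1[OF assms, of 3] by (simp add: numeral_3_eq_3 numeral_Bit0)
  have R: "sc d (m + 2) = (int d - 1) * sc d (m + 1) + (int d - 1) * sc d m" if "m \<ge> 2" for m
  proof -
    have e1: "sc d (m + 2) = int d * sc d (m+1) - ac d (m+1)" using rec1[OF assms, of "m+1"] by simp
    have e2: "ac d (m+1) = sc d m - ac d m" using rec2[of m d] that by simp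
    have e3: "sc d (m+1) = int d * sc d m - ac d m" using rec1[OF assms, of m] that by simp
    show ?thesis using e1 e2 e3 by (simp add: algebra_simps)
  qed
  have s5: "sc d 5 = (int d - 1) * sc d 4 + (int d - 1) * sc d 3"
    using R[of 3] by (simp add: numeral_eq_Suc)
  show ?thesis
  proof (intro conjI allI impI)
    show "int (nSF d 0) = int d ^ 4 + int d ^ 3 - int d ^ 2 - int d"
      using n[of 0] s4 s3 s2 a3 by (simp add: algebra_simps power_numeral_reduce)
    show "int (nSF d 1) = int d ^ 5 + int d ^ 4 - 2 * int d ^ 3 - int d ^ 2 + int d"
      using n[of 1] s5 s4 s3 s2 a3 by (simp add: algebra_simps power_numeral_reduce)
  next
    fix k :: nat assume k: "k \<ge> 2"
    show "int (nSF d k) = (int d - 1) * int (nSF d (k - 1)) + (int d - 1) * int (nSF d (k - 2))"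
    proof -
      obtain j where j: "k = j + 2" using k by (metis le_add_diff_inverse2)
      show ?thesis using R[of "k + 2"] k n[of k] n[of "k-1"] n[of "k-2"] unfolding j
        by (simp add: numeral_eq_Suc)
    qed
  qed
qed

end
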